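(* Assume the rearrangement setting described in the context, and assume additionally that: - $X$ is convex in $R$; and - there is no walk in $R$ that starts in $M$ and ends in $Y$, and no walk in $R$ that starts in $Y$ and ends in $M$. Let $z_0,\dots,z_I$ be a walk in $S$, and let $K=\{i\in\{1,\dots,I\}: z_{i-1}z_i\notin A_r\}$. Then $\#K\le 2$. Moreover, if $K=\{k,\ell\}$ with $k<\ell$, then there exist $m,n\in M$ and $x,y\in X$ such that: - $mx$ and $yn$ are proper arcs of $R$; - $z_{k-1}z_k=m\beta(x)\in A_d$; - $z_{\ell-1}z_\ell=\beta(y)n\in A_u$.
   Context: **Digraphs.** - A digraph $G$ is a pair $(V(G),A(G))$, where $V(G)$ is a finite non-empty set and $A(G)\subseteq V(G)\times V(G)$. Arcs are written $vw$. - An arc $vw$ with $v\ne w$ is proper. - Two vertices $u,w$ are adjacent if $uw\in A(G)$ or $wu\in A(G)$. $N_G(v)$ is the set of $w\ne v$ adjacent to $v$. - A walk is a sequence $v_0,\dots,v_I$ with $I\ge1$ and $v_{i-1}v_i\in A(G)$ for all $i$. - A set $X\subseteq V(G)$ is convex if every walk starting and ending in $X$ has all its vertices in $X$. **Rearrangement setting.** - $R=(Z,A(R))$ is a digraph. - $X,M\subseteq Z$ are disjoint. - $Y\subseteq Z$ satisfies $M\cap Y=\emptyset$ and $M\cap N_R(y)=\emptyset$ for all $y\in Y$. - $\beta:X\to Y$ is a map. - $S$ is the digraph with $V(S)=Z$ and $A(S)=A_r\cup A_d\cup A_u$, where: - $A_r=A(R)\setminus((M\times X)\cup(X\times M))$;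 - $A_d=\{m\beta(x): mx\in A(R)\cap(M\times X)\}$; - $A_u=\{\beta(x)m: xm\in A(R)\cap(X\times M)\}$. *)

theory Defs
  imports Main
begin

definition digraph :: "'a set \<Rightarrow> ('a \<times> 'a) set \<Rightarrow> bool" where
  "digraph V A \<longleftrightarrow> finite V \<and> V \<noteq> {} \<and> A \<subseteq> V \<times> V"

definition adjacent :: "('a \<times> 'a) set \<Rightarrow> 'a \<Rightarrow> 'a \<Rightarrow> bool" where
  "adjacent A u w \<longleftrightarrow> (u, w) \<in> A \<or> (w, u) \<in> A"

definition nbhd :: "('a \<times> 'a) set \<Rightarrow> 'a \<Rightarrow> 'a set" where
  "nbhd A v = {w. w \<noteq> v \<and> adjacent A v w}"

definition is_walk :: "('a \<times> 'a) set \<Rightarrow> (nat \<Rightarrow> 'a) \<Rightarrow> nat \<Rightarrow> bool" where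
  "is_walk A z I \<longleftrightarrow> 1 \<le> I \<and> (\<forall>i\<in>{1..I}. (z (i - 1), z i) \<in> A)"

definition convex :: "('a \<times> 'a) set \<Rightarrow> 'a set \<Rightarrow> bool" where
  "convex A X \<longleftrightarrow> (\<forall>z I. is_walk A z I \<and> z 0 \<in> X \<and> z I \<in> X \<longrightarrow> (\<forall>i\<in>{0..I}. z i \<in> X))"

definition Ar :: "('a \<times> 'a) set \<Rightarrow> 'a set \<Rightarrow> 'a set \<Rightarrow> ('a \<times> 'a) set" where
  "Ar AR X M = AR - ((M \<times> X) \<union> (X \<times> M))"

definition Ad :: "('a \<times> 'a) set \<Rightarrow> 'a set \<Rightarrow> 'a set \<Rightarrow> ('a \<Rightarrow> 'a) \<Rightarrow> ('a \<times> 'a) set" where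
  "Ad AR X M \<beta> = {(m, \<beta> x) | m x. (m, x) \<in> AR \<inter> (M \<times> X)}"

definition Au :: "('a \<times> 'a) set \<Rightarrow> 'a set \<Rightarrow> 'a set \<Rightarrow> ('a \<Rightarrow> 'a) \<Rightarrow> ('a \<times> 'a) set" where
  "Au AR X M \<beta> = {(\<beta> x, m) | x m. (x, m) \<in> AR \<inter> (X \<times> M)}"

definition AS :: "('a \<times> 'a) set \<Rightarrow> 'a set \<Rightarrow> 'a set \<Rightarrow> ('a \<Rightarrow> 'a) \<Rightarrow> ('a \<times> 'a) set" where
  "AS AR X M \<beta> = Ar AR X M \<union> Ad AR X M \<beta> \<union> Au AR X M \<beta>"

definition rearrangement_setting ::
  "'a set \<Rightarrow> ('a \<times> 'a) set \<Rightarrow> 'a set \<Rightarrow> 'a set \<Rightarrow> 'a set \<Rightarrow> ('a \<Rightarrow> 'a) \<Rightarrow> bool" where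
  "rearrangement_setting Z AR X M Y \<beta> \<longleftrightarrow>
     digraph Z AR \<and> X \<subseteq> Z \<and> M \<subseteq> Z \<and> Y \<subseteq> Z \<and> X \<inter> M = {} \<and>
     M \<inter> Y = {} \<and> (\<forall>y\<in>Y. M \<inter> nbhd AR y = {}) \<and> (\<forall>x\<in>X. \<beta> x \<in> Y)"

end

theory Submission
  imports Defs
begin

theorem lemma6:
  fixes Z X M Y :: "'a set" and AR :: "('a \<times> 'a) set" and \<beta> :: "'a \<Rightarrow> 'a"
    and z :: "nat \<Rightarrow> 'a" and I :: nat
  assumes setting: "rearrangement_setting Z AR X M Y \<beta>"
    and conv: "convex AR X"
    and noMY: "\<not> (\<exists>w J. is_walk AR w J \<and> w 0 \<in> M \<and> w J \<in> Y)"
    and noYM: "\<not> (\<exists>w J. is_walk AR w J \<and> w 0 \<in> Y \<and> w J \<in> M)"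
    and walk: "is_walk (AS AR X M \<beta>) z I"
  defines "K \<equiv> {i\<in>{1..I}. (z (i - 1), z i) \<notin> Ar AR X M}"
  shows "card K \<le> 2 \<and>
    (\<forall>k l. K = {k, l} \<and> k < l \<longrightarrow>
      (\<exists>m n x y. m \<in> M \<and> n \<in> M \<and> x \<in> X \<and> y \<in> X \<and>
         (m, x) \<in> AR \<and> m \<noteq> x \<and> (y, n) \<in> AR \<and> y \<noteq> n \<and>
         (z (k - 1), z k) = (m, \<beta> x) \<and> (m, \<beta> x) \<in> Ad AR X M \<beta> \<and>
         (z (l - 1), z l) = (\<beta> y, n) \<and> (\<beta> y, n) \<in> Au AR X M \<beta>))"
proof -
  from setting have XM: "X \<inter> M = {}" and MY: "M \<inter> Y = {}" and bY: "\<forall>x\<in>X. \<beta> x \<in> Y"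
    unfolding rearrangement_setting_def by auto
  from walk have arcs: "\<forall>i\<in>{1..I}. (z (i - 1), z i) \<in> AS AR X M \<beta>"
    by (auto simp: is_walk_def)
  have Kin: "(z (i - 1), z i) \<in> Ad AR X M \<beta> \<union> Au AR X M \<beta>" if "i \<in> K" for i
    using arcs that unfolding K_def AS_def by auto
  have KI: "1 \<le> i \<and> i \<le> I" if "i \<in> K" for i using that unfolding K_def by auto
  have finK: "finite K" unfolding K_def by auto
  have nK: "(z (t - 1), z t) \<in> AR" if "1 \<le> t" "t \<le> I" "t \<notin> K" for t
    using that unfolding K_def Ar_def by auto
  have seg: "is_walk AR (\<lambda>t. z (i + t)) (j - 1 - i)"
    if "i < j" "j \<le> I" "\<forall>t. i < t \<and> t < j \<longrightarrow> t \<notin> K" "i < j - 1" for i j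
    unfolding is_walk_def
  proof (intro conjI ballI)
    show "1 \<le> j - 1 - i" using that by auto
  next
    fix s assume s: "s \<in> {1..j - 1 - i}"
    have "(z (i + s - 1), z (i + s)) \<in> AR"
      using nK[of "i+s"] that s by auto
    moreover have "i + (s - 1) = i + s - 1" using s by auto
    ultimately show "(z (i + (s - 1)), z (i + s)) \<in> AR" by simp
  qed
  have adM: "fst p \<in> M \<and> snd p \<in> Y" if "p \<in> Ad AR X M \<beta>" for p
    using that bY unfolding Ad_def by auto
  have auY: "fst p \<in> Y \<and> snd p \<in> M" if "p \<in> Au AR X M \<beta>" for p
    using that bY unfolding Au_def by auto
  have nowalk: False if "i < j" "j \<le> I" "\<forall>t. i < t \<and> t < j \<longrightarrow> t \<notin> K"
      "z i \<in> P" "z (j - 1) \<in> Q" "P \<inter> Q = {}"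
      "\<not> (\<exists>w J. is_walk AR w J \<and> w 0 \<in> P \<and> w J \<in> Q)" for i j P Q
  proof (cases "i < j - 1")
    case True
    from seg[OF that(1-3) True] have "is_walk AR (\<lambda>t. z (i + t)) (j - 1 - i)" .
    moreover have "i + (j - 1 - i) = j - 1" using True by auto
    ultimately show False using that by fastforce
  next
    case False
    then have "j - 1 = i" using that by auto
    then show False using that by auto
  qed
  have lemA: "(z (i - 1), z i) \<in> Ad AR X M \<beta> \<and> (z (j - 1), z j) \<in> Au AR X M \<beta>"
    if ij: "i \<in> K" "j \<in> K" "i < j" "\<forall>t. i < t \<and> t < j \<longrightarrow> t \<notin> K" for i j
  proof -
    have jI: "j \<le> I" using KI[OF ij(2)] by auto
    have iA: "(z (i - 1), z i) \<in> Ad AR X M \<beta>"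
    proof (rule ccontr)
      assume "(z (i - 1), z i) \<notin> Ad AR X M \<beta>"
      then have "(z (i - 1), z i) \<in> Au AR X M \<beta>" using Kin[OF ij(1)] by auto
      then obtain y n where yn: "z (i - 1) = \<beta> y" "z i = n" "(y, n) \<in> AR" "y \<in> X" "n \<in> M"
        unfolding Au_def by auto
      show False
      proof (cases "(z (j - 1), z j) \<in> Au AR X M \<beta>")
        case True
        then have "z (j - 1) \<in> Y" using auY by fastforce
        then show False using nowalk[OF ij(3) jI ij(4), of M Y] yn MY noMY by auto
      next
        case False
        then have "(z (j - 1), z j) \<in> Ad AR X M \<beta>" using Kin[OF ij(2)] by auto
        then obtain m' x' where mx: "z (j - 1) = m'" "(m', x') \<in> AR" "x' \<in> X" "m' \<in> M"
          unfolding Ad_def by auto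
        define w where "w t = (if t = 0 then y else if t \<le> j - i then z (i + t - 1) else x')" for t
        have wk: "is_walk AR w (j - i + 1)"
          unfolding is_walk_def
        proof (intro conjI ballI)
          show "1 \<le> j - i + 1" by simp
        next
          fix t assume t: "t \<in> {1..j - i + 1}"
          show "(w (t - 1), w t) \<in> AR"
          proof (cases "t = 1")
            case True
            have "1 \<le> j - i" using ij(3) by simp
            then show ?thesis using yn True by (simp add: w_def)
          next
            case F1: False
            show ?thesis
            proof (cases "t = j - i + 1")
              case True
              then have "w (t - 1) = z (j - 1)" "w t = x'" using ij(3) by (auto simp: w_def)
              then show ?thesis using mx by simp
            next
              case False
              then have tt: "2 \<le> t" "t \<le> j - i" using t F1 by auto
              then have "w (t - 1) = z (i + t - 1 - 1)" "w t = z (i + t - 1)"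
                by (auto simp: w_def)
              moreover have "(z (i + t - 1 - 1), z (i + t - 1)) \<in> AR"
              proof -
                have "i < i + t - 1" "i + t - 1 < j" using tt ij(3) by auto
                then have "i + t - 1 \<notin> K" using ij(4) by blast
                then show ?thesis using nK[of "i + t - 1"] tt jI ij(3) by auto
              qed
              ultimately show ?thesis by simp
            qed
          qed
        qed
        have "w 0 \<in> X" "w (j - i + 1) \<in> X" using yn mx by (auto simp: w_def)
        then have "\<forall>t\<in>{0..j - i + 1}. w t \<in> X" using conv wk unfolding convex_def by blast
        moreover have "1 \<le> j - i" using ij(3) by simp
        then have "w 1 = n" using yn by (simp add: w_def)
        ultimately show False using yn XM by force
      qed
    qed
    have jA: "(z (j - 1), z j) \<in> Au AR X M \<beta>"
    proof (rule ccontr)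
      assume "(z (j - 1), z j) \<notin> Au AR X M \<beta>"
      then have "(z (j - 1), z j) \<in> Ad AR X M \<beta>" using Kin[OF ij(2)] by auto
      then have "z (j - 1) \<in> M" using adM by fastforce
      moreover have "z i \<in> Y" using adM[OF iA] by simp
      ultimately show False using nowalk[OF ij(3) jI ij(4), of Y M] MY noYM by auto
    qed
    show ?thesis using iA jA by simp
  qed
  have disj: "p \<notin> Ad AR X M \<beta> \<or> p \<notin> Au AR X M \<beta>" for p
    using adM auY MY by blast
  have c2: "card K \<le> 2"
  proof (rule ccontr)
    assume "\<not> card K \<le> 2"
    then have cK: "card K \<ge> 3" by simp
    then have ne: "K \<noteq> {}" by auto
    let ?a = "Min K" and ?c = "Max K"
    have "card (K - {?a, ?c}) \<ge> card K - card {?a, ?c}" by (rule diff_card_le_card_Diff) simp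
    moreover have "card {?a, ?c} \<le> 2" by (simp add: card_insert_le_m1)
    ultimately have "card (K - {?a, ?c}) > 0" using cK by linarith
    then obtain b where b: "b \<in> K" "b \<noteq> ?a" "b \<noteq> ?c" by (metis Diff_iff card_gt_0_iff ex_in_conv insertCI)
    have ab: "?a < b" using b finK Min_le le_neq_implies_less by metis
    have bc: "b < ?c" using b finK Max_ge le_neq_implies_less by metis
    have aK: "?a \<in> K" "?c \<in> K" using finK ne by auto
    define L where "L = {t \<in> K. t < b}"
    define R where "R = {t \<in> K. b < t}"
    have LR: "finite L" "L \<noteq> {}" "finite R" "R \<noteq> {}"
      using finK ab bc aK unfolding L_def R_def by auto
    let ?l = "Max L" and ?r = "Min R"
    have l: "?l \<in> K" "?l < b" using Max_in[OF LR(1,2)] unfolding L_def by auto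
    have r: "?r \<in> K" "b < ?r" using Min_in[OF LR(3,4)] unfolding R_def by auto
    have "\<forall>t. ?l < t \<and> t < b \<longrightarrow> t \<notin> K"
      using Max_ge[OF LR(1)] unfolding L_def by fastforce
    from lemA[OF l(1) b(1) l(2) this] have "(z (b - 1), z b) \<in> Au AR X M \<beta>" by simp
    moreover have "\<forall>t. b < t \<and> t < ?r \<longrightarrow> t \<notin> K"
      using Min_le[OF LR(3)] unfolding R_def by fastforce
    from lemA[OF b(1) r(1) r(2) this] have "(z (b - 1), z b) \<in> Ad AR X M \<beta>" by simp
    ultimately show False using disj by blast
  qed
  show ?thesis
  proof (intro conjI allI impI)
    fix k l assume kl: "K = {k, l} \<and> k < l"
    then have "k \<in> K" "l \<in> K" "k < l" "\<forall>t. k < t \<and> t < l \<longrightarrow> t \<notin> K" by auto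
    from lemA[OF this] have A: "(z (k - 1), z k) \<in> Ad AR X M \<beta>" "(z (l - 1), z l) \<in> Au AR X M \<beta>" by auto
    from A(1) obtain m x where mx: "(z (k - 1), z k) = (m, \<beta> x)" "(m, x) \<in> AR" "m \<in> M" "x \<in> X"
      unfolding Ad_def by auto
    from A(2) obtain y n where yn: "(z (l - 1), z l) = (\<beta> y, n)" "(y, n) \<in> AR" "y \<in> X" "n \<in> M"
      unfolding Au_def by auto
    show "\<exists>m n x y. m \<in> M \<and> n \<in> M \<and> x \<in> X \<and> y \<in> X \<and>
         (m, x) \<in> AR \<and> m \<noteq> x \<and> (y, n) \<in> AR \<and> y \<noteq> n \<and>
         (z (k - 1), z k) = (m, \<beta> x) \<and> (m, \<beta> x) \<in> Ad AR X M \<beta> \<and>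
         (z (l - 1), z l) = (\<beta> y, n) \<and> (\<beta> y, n) \<in> Au AR X M \<beta>"
      using mx yn A XM by (intro exI[of _ m] exI[of _ n] exI[of _ x] exI[of _ y]) auto
  qed (rule c2)
qed

end
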